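(* Let $N\in\mathbb{N}_+$, let $\mathcal{R}$ be a countable set, and let $f:\mathbb{R}^N\to\mathcal{R}$. Suppose $f$ admits a dominating set $S\subseteq[N]$ of sensitivity $s>0$. Let $\epsilon>0$ and consider the mechanism $\mathcal{A}$ which, on input $x\in\mathbb{R}^N$, samples independent random variables $X_i\sim\mathsf{Lap}(s/\epsilon)$ for $i\in S$, forms $\tilde x$ by $\tilde x^{(i)}=x^{(i)}+X_i$ for $i\in S$ and $\tilde x^{(i)}=x^{(i)}$ for $i\notin S$, and outputs $f(\tilde x)$. Then $\mathcal{A}$ is $(\epsilon,0)$-differentially private: for all neighboring $x,x'\in\mathbb{R}^N$ and all $y\in\mathcal{R}$, $\Pr[\mathcal{A}(x)=y]\le e^{\epsilon}\Pr[\mathcal{A}(x')=y]$.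
   Context: Two vectors $x,x'\in\mathbb{R}^N$ are neighboring if $\|x-x'\|_0\le 1$ and $\|x-x'\|_\infty\le 1$ (they differ in at most one coordinate, by at most $1$). For $x\in\mathbb{R}^N$ and $S\subseteq[N]$, $x|_S\in\mathbb{R}^S$ denotes the restriction of $x$ to the coordinates in $S$, and $f(x|_S,x|_{[N]\setminus S})$ means $f(x)$. Dominating set: $f$ admits a dominating set $S\subseteq[N]$ of sensitivity $s\ge 0$ if for every pair of neighboring $x,x'$ there is a vector $a\in\mathbb{R}^S$ with $\|a\|_1\le s$ such that (i) $a$ is a function only of $f(x)$ and $x'-x$, and (ii) $f(x'|_S+a,\;x'|_{[N]\setminus S})=f(x)$. $\mathsf{Lap}(b)$ is the Laplace distribution with density $\frac{1}{2b}e^{-|x|/b}$. *)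

theory Defs
  imports "HOL-Probability.Probability"
begin

text \<open>Vectors in R^N are elements of real ^ 'n for a finite index type 'n (N = CARD('n)).\<close>

definition neighboring :: "real ^ 'n \<Rightarrow> real ^ 'n \<Rightarrow> bool" where
  "neighboring x x' \<longleftrightarrow>
     card {i. x $ i \<noteq> x' $ i} \<le> 1 \<and> (\<forall>i. \<bar>x $ i - x' $ i\<bar> \<le> 1)"

text \<open>A vector a in R^S is represented as a vector of real ^ 'n vanishing outside S;
  then f(x'|_S + a, x'|_{[N]-S}) is f (x' + a).  Condition (i) (a depends only on
  f(x) and x' - x) is expressed by a choice function A applied to f x and x' - x.\<close>

definition dominating_set :: "(real ^ 'n \<Rightarrow> 'r) \<Rightarrow> 'n set \<Rightarrow> real \<Rightarrow> bool" where
  "dominating_set f S s \<longleftrightarrow> s \<ge> 0 \<and>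
     (\<exists>A :: 'r \<Rightarrow> real ^ 'n \<Rightarrow> real ^ 'n.
        \<forall>x x'. neighboring x x' \<longrightarrow>
          (let a = A (f x) (x' - x) in
             (\<forall>i. i \<notin> S \<longrightarrow> a $ i = 0) \<and>
             (\<Sum>i\<in>S. \<bar>a $ i\<bar>) \<le> s \<and>
             f (x' + a) = f x))"

definition laplace_density :: "real \<Rightarrow> real \<Rightarrow> real" where
  "laplace_density b x = exp (- \<bar>x\<bar> / b) / (2 * b)"

definition Lap :: "real \<Rightarrow> real measure" where
  "Lap b = density lborel (\<lambda>x. ennreal (laplace_density b x))"

definition lap_mech :: "(real ^ 'n \<Rightarrow> 'r) \<Rightarrow> 'n set \<Rightarrow> real \<Rightarrow> real \<Rightarrow> real ^ 'n \<Rightarrow> 'r measure" where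
  "lap_mech f S s \<epsilon> x =
     distr (PiM S (\<lambda>_. Lap (s / \<epsilon>))) (count_space UNIV)
       (\<lambda>z. f (\<chi> i. if i \<in> S then x $ i + z i else x $ i))"

end

theory Submission
  imports Defs
begin

lemma sf_density_lborel:
  fixes D :: "real \<Rightarrow> ennreal"
  assumes "D \<in> borel_measurable borel" "\<And>t. D t \<noteq> \<infinity>"
  shows "sigma_finite_measure (density lborel D)"
proof -
  show ?thesis using assms
    by (subst sigma_finite_measure.sigma_finite_iff_density_finite[OF sigma_finite_lborel]) auto
qed

lemma indicator_PiE_prod:
  assumes "z \<in> extensional I" "finite I"
  shows "indicator (Pi\<^sub>E I A) z = (\<Prod>i\<in>I. indicator (A i) (z i) :: ennreal)"
proof (cases "z \<in> Pi\<^sub>E I A")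
  case True
  then show ?thesis by (simp add: PiE_iff)
next
  case False
  then obtain i where "i \<in> I" "z i \<notin> A i" using assms(1) by (auto simp: PiE_iff)
  then have "(\<Prod>i\<in>I. indicator (A i) (z i) :: ennreal) = 0"
    using assms(2) `i \<in> I` `z i \<notin> A i` by (intro prod_zero) (auto intro!: bexI[of _ i])
  then show ?thesis using False by simp
qed

lemma PiM_density_lborel:
  fixes D :: "'i \<Rightarrow> real \<Rightarrow> ennreal"
  assumes fin: "finite I" and meas[measurable]: "\<And>i. D i \<in> borel_measurable borel"
    and fn: "\<And>i t. D i t \<noteq> \<infinity>"
  shows "PiM I (\<lambda>i. density lborel (D i)) = density (PiM I (\<lambda>_. lborel)) (\<lambda>z. \<Prod>i\<in>I. D i (z i))"
proof -
  interpret P: product_sigma_finite "\<lambda>i. density lborel (D i)"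
    by (intro product_sigma_finite.intro sf_density_lborel meas fn)
  interpret L: product_sigma_finite "\<lambda>_::'i. lborel :: real measure"
    by (intro product_sigma_finite.intro sigma_finite_lborel)
  have "density (PiM I (\<lambda>_. lborel)) (\<lambda>z. \<Prod>i\<in>I. D i (z i)) = PiM I (\<lambda>i. density lborel (D i))"
  proof (rule P.PiM_eqI[OF fin])
    show "sets (density (PiM I (\<lambda>_. lborel)) (\<lambda>z. \<Prod>i\<in>I. D i (z i))) = sets (PiM I (\<lambda>i. density lborel (D i)))"
      unfolding sets_density by (intro sets_PiM_cong refl) simp
  next
    fix A assume A: "\<And>i. i \<in> I \<Longrightarrow> A i \<in> sets (density lborel (D i))"
    then have A'[measurable]: "\<And>i. i \<in> I \<Longrightarrow> A i \<in> sets borel" by simp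
    have "Pi\<^sub>E I A \<in> sets (PiM I (\<lambda>_. lborel))"
      using A' by (intro sets_PiM_I_finite fin) auto
    then have "emeasure (density (PiM I (\<lambda>_. lborel)) (\<lambda>z. \<Prod>i\<in>I. D i (z i))) (Pi\<^sub>E I A)
       = (\<integral>\<^sup>+ z. (\<Prod>i\<in>I. D i (z i)) * indicator (Pi\<^sub>E I A) z \<partial>PiM I (\<lambda>_. lborel))"
      by (intro emeasure_density) auto
    also have "\<dots> = (\<integral>\<^sup>+ z. (\<Prod>i\<in>I. D i (z i) * indicator (A i) (z i)) \<partial>PiM I (\<lambda>_. lborel))"
    proof (intro nn_integral_cong)
      fix z :: "'i \<Rightarrow> real" assume "z \<in> space (PiM I (\<lambda>_. lborel))"
      then have "z \<in> extensional I" by (simp add: space_PiM PiE_def)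
      then show "(\<Prod>i\<in>I. D i (z i)) * indicator (Pi\<^sub>E I A) z = (\<Prod>i\<in>I. D i (z i) * indicator (A i) (z i))"
        by (simp add: indicator_PiE_prod[OF _ fin] prod.distrib)
    qed
    also have "\<dots> = (\<Prod>i\<in>I. \<integral>\<^sup>+ t. D i t * indicator (A i) t \<partial>lborel)"
      using A' by (intro L.product_nn_integral_prod fin) auto
    also have "\<dots> = (\<Prod>i\<in>I. emeasure (density lborel (D i)) (A i))"
      using A' by (intro prod.cong refl) (simp add: emeasure_density)
    finally show "emeasure (density (PiM I (\<lambda>_. lborel)) (\<lambda>z. \<Prod>i\<in>I. D i (z i))) (Pi\<^sub>E I A)
       = (\<Prod>i\<in>I. emeasure (density lborel (D i)) (A i))" .
  qed
  then show ?thesis by simp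
qed

lemma lap_meas[measurable]: "(\<lambda>t. laplace_density b t) \<in> borel_measurable borel"
  unfolding laplace_density_def by measurable

lemma lap_nonneg: "b > 0 \<Longrightarrow> laplace_density b t \<ge> 0"
  unfolding laplace_density_def by simp

lemma lap_shift_le:
  assumes b: "b > 0"
  shows "laplace_density b (t - c) \<le> exp (\<bar>c\<bar> / b) * laplace_density b t"
proof -
  have "- \<bar>t - c\<bar> / b \<le> \<bar>c\<bar> / b + - \<bar>t\<bar> / b"
    using b by (simp add: divide_simps)
  then have "exp (- \<bar>t - c\<bar> / b) \<le> exp (\<bar>c\<bar> / b) * exp (- \<bar>t\<bar> / b)"
    by (simp add: exp_add[symmetric])
  then show ?thesis using b unfolding laplace_density_def
    by (simp add: divide_right_mono mult.assoc[symmetric] del: exp_le_cancel_iff)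
qed

lemma lap_emeasure_shift:
  assumes B[measurable]: "B \<in> sets borel"
  shows "emeasure (Lap b) ((\<lambda>t. t + c) -` B) = emeasure (density lborel (\<lambda>t. ennreal (laplace_density b (t - c)))) B"
proof -
  have [measurable]: "(\<lambda>t. t + c) -` B \<in> sets borel"
    using measurable_sets[OF _ B, of "\<lambda>t. t + c" borel] by simp
  have "emeasure (Lap b) ((\<lambda>t. t + c) -` B) = (\<integral>\<^sup>+ t. ennreal (laplace_density b t) * indicator ((\<lambda>t. t + c) -` B) t \<partial>lborel)"
    unfolding Lap_def by (intro emeasure_density) auto
  also have "\<dots> = (\<integral>\<^sup>+ t. ennreal (laplace_density b ((c + t) - c)) * indicator B (c + t) \<partial>lborel)"
    by (intro nn_integral_cong) (simp add: indicator_def add.commute)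
  also have "\<dots> = (\<integral>\<^sup>+ u. ennreal (laplace_density b (u - c)) * indicator B u \<partial>distr lborel borel ((+) c))"
    by (subst nn_integral_distr) auto
  also have "\<dots> = emeasure (density lborel (\<lambda>t. ennreal (laplace_density b (t - c)))) B"
    by (simp add: lborel_distr_plus emeasure_density)
  finally show ?thesis .
qed

lemma lap_finite:
  assumes b: "b > 0"
  shows "emeasure (Lap b) UNIV < \<infinity>"
proof -
  let ?e = "exponential_density (1/b)"
  have e1: "(\<integral>\<^sup>+ t. ennreal (?e t) \<partial>lborel) = 1"
    using prob_space.emeasure_space_1[OF prob_space_exponential_density[of "1/b"]] b
    by (simp add: emeasure_density)
  have e2: "(\<integral>\<^sup>+ t. ennreal (?e (- t)) \<partial>lborel) = 1"
  proof -
    have "(\<integral>\<^sup>+ t. ennreal (?e (- t)) \<partial>lborel) = (\<integral>\<^sup>+ t. ennreal (?e t) \<partial>distr lborel borel uminus)"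
      by (subst nn_integral_distr) auto
    then show ?thesis using e1 by (simp add: lborel_distr_uminus)
  qed
  have "emeasure (Lap b) UNIV = (\<integral>\<^sup>+ t. ennreal (laplace_density b t) \<partial>lborel)"
    unfolding Lap_def by (subst emeasure_density) auto
  also have "\<dots> \<le> (\<integral>\<^sup>+ t. ennreal (?e t) + ennreal (?e (- t)) \<partial>lborel)"
  proof (intro nn_integral_mono)
    fix t
    have "laplace_density b t \<le> ?e t + ?e (- t)"
      using b unfolding laplace_density_def exponential_density_def
      by (auto simp: divide_simps)
    then show "ennreal (laplace_density b t) \<le> ennreal (?e t) + ennreal (?e (- t))"
      using b by (simp add: ennreal_plus[symmetric] exponential_density_nonneg del: ennreal_plus)
  qed
  also have "\<dots> = 2"
    by (subst nn_integral_add) (auto simp: e1 e2)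
  finally show ?thesis by (auto simp: le_less_trans)
qed

lemma sets_Lap[simp, measurable_cong]: "sets (Lap b) = sets borel"
  unfolding Lap_def by simp

lemma space_Lap[simp]: "space (Lap b) = UNIV"
  unfolding Lap_def by simp

lemma sf_Lap: "sigma_finite_measure (Lap b)"
  unfolding Lap_def by (rule sf_density_lborel) auto

lemma PiM_shift:
  fixes c :: "'i \<Rightarrow> real"
  assumes fin: "finite I"
  shows "distr (PiM I (\<lambda>_. Lap b)) (PiM I (\<lambda>_. lborel)) (\<lambda>z. \<lambda>i\<in>I. z i + c i)
     = PiM I (\<lambda>i. density lborel (\<lambda>t. ennreal (laplace_density b (t - c i))))"
proof -
  interpret P: product_sigma_finite "\<lambda>i. density lborel (\<lambda>t. ennreal (laplace_density b (t - c i)))"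
    by (intro product_sigma_finite.intro sf_density_lborel) auto
  interpret L: product_sigma_finite "\<lambda>_::'i. Lap b"
    by (intro product_sigma_finite.intro sf_Lap)
  have hm[measurable]: "(\<lambda>z. \<lambda>i\<in>I. z i + c i) \<in> PiM I (\<lambda>_. Lap b) \<rightarrow>\<^sub>M PiM I (\<lambda>_. lborel)"
    by measurable
  show ?thesis
  proof (rule P.PiM_eqI[OF fin])
    show "sets (distr (PiM I (\<lambda>_. Lap b)) (PiM I (\<lambda>_. lborel)) (\<lambda>z. \<lambda>i\<in>I. z i + c i))
       = sets (PiM I (\<lambda>i. density lborel (\<lambda>t. ennreal (laplace_density b (t - c i)))))"
      unfolding sets_distr by (intro sets_PiM_cong refl) simp
  next
    fix A assume A: "\<And>i. i \<in> I \<Longrightarrow> A i \<in> sets (density lborel (\<lambda>t. ennreal (laplace_density b (t - c i))))"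
    then have A'[measurable]: "\<And>i. i \<in> I \<Longrightarrow> A i \<in> sets borel" by simp
    have PA: "Pi\<^sub>E I A \<in> sets (PiM I (\<lambda>_. lborel))"
      using A' by (intro sets_PiM_I_finite fin) auto
    have pre: "(\<lambda>z. \<lambda>i\<in>I. z i + c i) -` Pi\<^sub>E I A \<inter> space (PiM I (\<lambda>_. Lap b))
       = Pi\<^sub>E I (\<lambda>i. (\<lambda>t. t + c i) -` A i)"
      by (auto simp: space_PiM PiE_iff)
    have pm: "\<And>i. i \<in> I \<Longrightarrow> (\<lambda>t. t + c i) -` A i \<in> sets (Lap b)"
    proof -
      fix i assume "i \<in> I"
      then have "A i \<in> sets borel" by (rule A')
      then have "(\<lambda>t. t + c i) -` A i \<inter> space borel \<in> sets borel"
        by (intro measurable_sets[of "\<lambda>t. t + c i" borel borel "A i"]) auto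
      then show "(\<lambda>t. t + c i) -` A i \<in> sets (Lap b)" by simp
    qed
    show "emeasure (distr (PiM I (\<lambda>_. Lap b)) (PiM I (\<lambda>_. lborel)) (\<lambda>z. \<lambda>i\<in>I. z i + c i)) (Pi\<^sub>E I A)
       = (\<Prod>i\<in>I. emeasure (density lborel (\<lambda>t. ennreal (laplace_density b (t - c i)))) (A i))"
      using PA pm A' by (simp add: emeasure_distr pre L.emeasure_PiM fin lap_emeasure_shift)
  qed
qed

lemma neighboring_shift:
  assumes "neighboring x x'"
  shows "neighboring u (u + (x' - x))"
proof -
  have "{i. x' $ i \<noteq> x $ i} = {i. x $ i \<noteq> x' $ i}" by auto
  then show ?thesis using assms unfolding neighboring_def by (simp add: abs_minus_commute)
qed

lemma g_sum_form:
  fixes S :: "'n::finite set" and u :: "real ^ 'n"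
  shows "(\<chi> i. if i \<in> S then u $ i + z i else u $ i) = u + (\<Sum>j\<in>S. z j *\<^sub>R axis j 1)"
  by (simp add: vec_eq_iff sum_component axis_def if_distrib[where f="\<lambda>t. _ * t"] cong: if_cong)

lemma g_meas[measurable]:
  fixes S :: "'n::finite set" and u :: "real ^ 'n"
  shows "(\<lambda>z. \<chi> i. if i \<in> S then u $ i + z i else u $ i) \<in> borel_measurable (PiM S (\<lambda>_. Lap b))"
  unfolding g_sum_form by measurable

theorem theorem3p1:
  fixes f :: "real ^ 'n \<Rightarrow> 'r::countable"
    and S :: "'n set" and s \<epsilon> :: real
  assumes f_meas: "f \<in> measurable borel (count_space UNIV)"
    and dom: "dominating_set f S s"
    and s_pos: "s > 0"
    and eps_pos: "\<epsilon> > 0"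
    and nb: "neighboring x x'"
  shows "measure (lap_mech f S s \<epsilon> x) {y} \<le> exp \<epsilon> * measure (lap_mech f S s \<epsilon> x') {y}"
proof -
  define b where "b = s / \<epsilon>"
  have b: "b > 0" using s_pos eps_pos by (simp add: b_def)
  have sb: "s / b = \<epsilon>" using s_pos eps_pos by (simp add: b_def)
  define \<mu> where "\<mu> = PiM S (\<lambda>_. Lap b)"
  define \<Lambda> where "\<Lambda> = PiM S (\<lambda>_. lborel :: real measure)"
  obtain A :: "'r \<Rightarrow> real ^ 'n \<Rightarrow> real ^ 'n" where
    Ap: "\<And>x x'. neighboring x x' \<Longrightarrow> (\<forall>i. i \<notin> S \<longrightarrow> A (f x) (x' - x) $ i = 0) \<and>
             (\<Sum>i\<in>S. \<bar>A (f x) (x' - x) $ i\<bar>) \<le> s \<and> f (x' + A (f x) (x' - x)) = f x"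
    using dom unfolding dominating_set_def Let_def by blast
  define d where "d = x' - x"
  define a where "a = A y d"
  define g where "g u z = (\<chi> i. if i \<in> S then u $ i + z i else u $ i)" for u :: "real ^ 'n" and z :: "'n \<Rightarrow> real"
  define h where "h z = (\<lambda>i\<in>S. z i + a $ i)" for z :: "'n \<Rightarrow> real"
  have fin: "finite S" by simp
  have sp: "space \<mu> = space \<Lambda>" by (simp add: \<mu>_def \<Lambda>_def space_PiM)
  have sets_eq: "sets \<mu> = sets \<Lambda>" unfolding \<mu>_def \<Lambda>_def by (intro sets_PiM_cong refl) simp
  have gm: "(\<lambda>z. f (g u z)) \<in> \<mu> \<rightarrow>\<^sub>M count_space UNIV" for u
    unfolding g_def \<mu>_def using f_meas by measurable
  have hm: "h \<in> \<mu> \<rightarrow>\<^sub>M \<Lambda>" unfolding h_def \<mu>_def \<Lambda>_def by measurable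
  define Ex where "Ex = (\<lambda>z. f (g x z)) -` {y} \<inter> space \<mu>"
  define Ey where "Ey = (\<lambda>z. f (g x' z)) -` {y} \<inter> space \<mu>"
  have Ex_sets: "Ex \<in> sets \<mu>" unfolding Ex_def using gm by (rule measurable_sets) simp
  have Ey_sets: "Ey \<in> sets \<mu>" unfolding Ey_def using gm by (rule measurable_sets) simp
  have Ey_sets': "Ey \<in> sets \<Lambda>" using Ey_sets sets_eq by simp
  have sub: "Ex \<subseteq> h -` Ey \<inter> space \<mu>"
  proof
    fix z assume z: "z \<in> Ex"
    then have zs: "z \<in> space \<mu>" and fy: "f (g x z) = y" by (auto simp: Ex_def)
    define u where "u = g x z"
    have nbu: "neighboring u (u + d)" using neighboring_shift[OF nb] by (simp add: d_def)
    from Ap[OF nbu] have a0: "\<And>i. i \<notin> S \<Longrightarrow> a $ i = 0" and fa: "f (u + d + a) = y"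
      using fy by (auto simp: a_def u_def)
    have "g x' (h z) = u + d + a"
      using a0 by (auto simp: vec_eq_iff g_def h_def u_def d_def)
    then have "f (g x' (h z)) = y" using fa by simp
    moreover have "h z \<in> space \<mu>" by (simp add: h_def \<mu>_def space_PiM)
    ultimately show "z \<in> h -` Ey \<inter> space \<mu>" using zs by (simp add: Ey_def)
  qed
  have main: "emeasure \<mu> Ex \<le> ennreal (exp \<epsilon>) * emeasure \<mu> Ey"
  proof (cases "Ex = {}")
    case True then show ?thesis by simp
  next
    case False
    then obtain z0 where "z0 \<in> Ex" by blast
    then have fz0: "f (g x z0) = y" by (simp add: Ex_def)
    have Asum: "(\<Sum>i\<in>S. \<bar>a $ i\<bar>) \<le> s"
        using Ap[OF neighboring_shift[OF nb, of "g x z0"]] fz0 by (simp add: a_def d_def)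
    have mu_dens: "\<mu> = density \<Lambda> (\<lambda>z. \<Prod>i\<in>S. ennreal (laplace_density b (z i)))"
      unfolding \<mu>_def \<Lambda>_def Lap_def by (rule PiM_density_lborel) auto
    have shift_dens: "distr \<mu> \<Lambda> h = density \<Lambda> (\<lambda>z. \<Prod>i\<in>S. ennreal (laplace_density b (z i - a $ i)))"
      unfolding \<mu>_def \<Lambda>_def h_def
      by (subst PiM_shift[OF fin]) (rule PiM_density_lborel, auto)
    have pw: "(\<Prod>i\<in>S. ennreal (laplace_density b (z i - a $ i)))
        \<le> ennreal (exp \<epsilon>) * (\<Prod>i\<in>S. ennreal (laplace_density b (z i)))" for z
    proof -
      have "(\<Prod>i\<in>S. laplace_density b (z i - a $ i)) \<le> (\<Prod>i\<in>S. exp (\<bar>a $ i\<bar> / b) * laplace_density b (z i))"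
        by (intro prod_mono) (auto simp: lap_nonneg b lap_shift_le)
      also have "\<dots> = exp (\<Sum>i\<in>S. \<bar>a $ i\<bar> / b) * (\<Prod>i\<in>S. laplace_density b (z i))"
        by (simp add: prod.distrib exp_sum)
      also have "\<dots> \<le> exp \<epsilon> * (\<Prod>i\<in>S. laplace_density b (z i))"
      proof (intro mult_right_mono prod_nonneg)
        have "(\<Sum>i\<in>S. \<bar>a $ i\<bar> / b) = (\<Sum>i\<in>S. \<bar>a $ i\<bar>) / b" by (simp add: sum_divide_distrib)
        also have "\<dots> \<le> s / b" using Asum b by (simp add: divide_right_mono)
        finally show "exp (\<Sum>i\<in>S. \<bar>a $ i\<bar> / b) \<le> exp \<epsilon>" using sb by simp
      qed (auto simp: lap_nonneg b)
      finally show ?thesis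
        by (simp add: prod_ennreal lap_nonneg b ennreal_mult[symmetric] prod_nonneg ennreal_leI)
    qed
    have "emeasure \<mu> Ex \<le> emeasure \<mu> (h -` Ey \<inter> space \<mu>)"
      by (rule emeasure_mono[OF sub]) (rule measurable_sets[OF hm Ey_sets'])
    also have "\<dots> = emeasure (distr \<mu> \<Lambda> h) Ey"
      by (rule emeasure_distr[OF hm Ey_sets', symmetric])
    also have "\<dots> = (\<integral>\<^sup>+ z. (\<Prod>i\<in>S. ennreal (laplace_density b (z i - a $ i))) * indicator Ey z \<partial>\<Lambda>)"
      unfolding shift_dens using Ey_sets' by (intro emeasure_density) (auto simp: \<Lambda>_def)
    also have "\<dots> \<le> (\<integral>\<^sup>+ z. ennreal (exp \<epsilon>) * ((\<Prod>i\<in>S. ennreal (laplace_density b (z i))) * indicator Ey z) \<partial>\<Lambda>)"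
      by (intro nn_integral_mono) (auto simp: indicator_def pw mult.assoc[symmetric])
    also have "\<dots> = ennreal (exp \<epsilon>) * (\<integral>\<^sup>+ z. (\<Prod>i\<in>S. ennreal (laplace_density b (z i))) * indicator Ey z \<partial>\<Lambda>)"
      using Ey_sets' by (intro nn_integral_cmult) (auto simp: \<Lambda>_def)
    also have "(\<integral>\<^sup>+ z. (\<Prod>i\<in>S. ennreal (laplace_density b (z i))) * indicator Ey z \<partial>\<Lambda>) = emeasure \<mu> Ey"
      unfolding mu_dens using Ey_sets' by (intro emeasure_density[symmetric]) (auto simp: \<Lambda>_def)
      finally show ?thesis .
  qed
  interpret L: product_sigma_finite "\<lambda>_::'n. Lap b"
    by (intro product_sigma_finite.intro sf_Lap)
  have "emeasure \<mu> Ey \<le> emeasure \<mu> (space \<mu>)" using Ey_sets by (rule emeasure_mono[OF sets.sets_into_space]) simp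
  also have "space \<mu> = Pi\<^sub>E S (\<lambda>_. UNIV)" by (simp add: \<mu>_def space_PiM)
  also have "emeasure \<mu> (Pi\<^sub>E S (\<lambda>_. UNIV)) = (\<Prod>i\<in>S. emeasure (Lap b) UNIV)"
    unfolding \<mu>_def by (subst L.emeasure_PiM) auto
  also have "\<dots> < \<infinity>" using lap_finite[OF b] by (simp add: power_less_top_ennreal)
  finally have fin_y: "emeasure \<mu> Ey < \<infinity>" .
  have lx: "measure (lap_mech f S s \<epsilon> x) {y} = measure \<mu> Ex"
    unfolding lap_mech_def Ex_def \<mu>_def b_def g_def
    by (rule measure_distr) (use gm in \<open>auto simp: g_def \<mu>_def b_def\<close>)
  have lx': "measure (lap_mech f S s \<epsilon> x') {y} = measure \<mu> Ey"
    unfolding lap_mech_def Ey_def \<mu>_def b_def g_def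
    by (rule measure_distr) (use gm in \<open>auto simp: g_def \<mu>_def b_def\<close>)
  have "measure \<mu> Ex = enn2real (emeasure \<mu> Ex)" by (simp add: measure_def)
  also have "\<dots> \<le> enn2real (ennreal (exp \<epsilon>) * emeasure \<mu> Ey)"
    using main fin_y by (intro enn2real_mono) (auto simp: ennreal_mult_less_top)
  also have "\<dots> = exp \<epsilon> * measure \<mu> Ey" by (simp add: enn2real_mult measure_def)
  finally show ?thesis using lx lx' by simp
qed

end
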